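(* Let $n\ge 2$. For $k\in\mathbb{N}$ let $\bar c_k := c_k^{\mathrm{EH}}/\bigl(\bigl[\tfrac{k+n-1}{n}\bigr]\pi\bigr)$ be the normalized $k$-th Ekeland–Hofer capacity on ellipsoids in $\mathbb{R}^{2n}$. Then, as $k\to\infty$, $\bar c_k$ converges uniformly on ellipsoids to the normalized symplectic capacity $c_\infty$ given by $$c_\infty\bigl(E(a_1,\dots,a_n)\bigr)=\frac{n}{1/a_1+\dots+1/a_n},$$ in the sense that $$\sup\Bigl\{\bigl|\bar c_k\bigl(E(a_1,\dots,a_{n-1},1)\bigr)-c_\infty\bigl(E(a_1,\dots,a_{n-1},1)\bigr)\bigr| \;:\; 0<a_1\le\dots\le a_{n-1}\le 1\Bigr\}\longrightarrow 0 \quad (k\to\infty).$$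
   Context: For $0<a_1\le\dots\le a_n\le\infty$, the ellipsoid is $E(a_1,\dots,a_n)=\{z\in\mathbb{C}^n : \sum_j |z_j|^2/a_j<1\}\subset\mathbb{R}^{2n}$ with the standard symplectic form. The Ekeland–Hofer capacities $c_1^{\mathrm{EH}}\le c_2^{\mathrm{EH}}\le\dots$ take the following values on ellipsoids: writing the numbers $m\,a_i\pi$ ($m\in\mathbb{N}$, $1\le i\le n$) in increasing order, with repetitions, as $d_1\le d_2\le\dots$, one has $c_k^{\mathrm{EH}}(E(a_1,\dots,a_n))=d_k$. $[x]$ denotes the largest integer $\le x$. A capacity is normalized if it takes the value $1$ on the unit ball $B^{2n}(1)=E(1,\dots,1)$. *)

theory Defs
  imports Complex_Main
begin

text \<open>An ellipsoid E(a_1,...,a_n) in R^{2n} (all a_i finite) is represented by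
  its parameter function a, with a_{i+1} stored as a i for i < n.\<close>

definition eh_count :: "nat \<Rightarrow> (nat \<Rightarrow> real) \<Rightarrow> real \<Rightarrow> nat" where
  "eh_count n a t = card {(m, i). 1 \<le> m \<and> i < n \<and> real m * a i * pi \<le> t}"

text \<open>k-th Ekeland--Hofer capacity of E(a_1,...,a_n): the k-th term d_k of the
  nondecreasing enumeration (with repetitions) of the numbers m * a_i * pi.\<close>
definition EH_cap :: "nat \<Rightarrow> nat \<Rightarrow> (nat \<Rightarrow> real) \<Rightarrow> real" where
  "EH_cap n k a = (LEAST t. k \<le> eh_count n a t)"

definition EH_cap_bar :: "nat \<Rightarrow> nat \<Rightarrow> (nat \<Rightarrow> real) \<Rightarrow> real" where
  "EH_cap_bar n k a = EH_cap n k a / (real ((k + n - 1) div n) * pi)"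

definition c_infty :: "nat \<Rightarrow> (nat \<Rightarrow> real) \<Rightarrow> real" where
  "c_infty n a = real n / (\<Sum>i<n. 1 / a i)"

end

theory Submission
  imports Defs
begin

definition PS :: "nat \<Rightarrow> (nat \<Rightarrow> real) \<Rightarrow> real \<Rightarrow> (nat \<times> nat) set" where
  "PS n a t = {(m, i). 1 \<le> m \<and> i < n \<and> real m * a i * pi \<le> t}"

lemma PS_eq:
  assumes pos: "\<forall>i<n. 0 < a i"
  shows "PS n a t = (\<lambda>(i,m). (m,i)) ` (SIGMA i:{..<n}. {1..nat \<lfloor>t / (a i * pi)\<rfloor>})"
proof -
  have key: "(real m * a i * pi \<le> t) = (m \<le> nat \<lfloor>t / (a i * pi)\<rfloor>)" if "i < n" "1 \<le> m" for m i
  proof -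
    have ai: "a i * pi > 0" using pos that by simp
    have "(real m * a i * pi \<le> t) = (real m \<le> t / (a i * pi))"
      using ai by (simp add: pos_le_divide_eq mult.assoc)
    also have "\<dots> = (int m \<le> \<lfloor>t / (a i * pi)\<rfloor>)"
      by (simp add: le_floor_iff)
    also have "\<dots> = (m \<le> nat \<lfloor>t / (a i * pi)\<rfloor>)"
      using that(2) by linarith
    finally show ?thesis .
  qed
  show ?thesis
    unfolding PS_def
  proof (rule set_eqI, rule iffI)
    fix x assume "x \<in> {(m, i). 1 \<le> m \<and> i < n \<and> real m * a i * pi \<le> t}"
    then obtain m i where x: "x = (m,i)" "1 \<le> m" "i < n" "real m * a i * pi \<le> t" by blast
    then have "m \<le> nat \<lfloor>t / (a i * pi)\<rfloor>" using key by blast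
    show "x \<in> (\<lambda>(i,m). (m,i)) ` (SIGMA i:{..<n}. {1..nat \<lfloor>t / (a i * pi)\<rfloor>})"
      unfolding x(1) by (rule image_eqI[where x="(i,m)"]) (use x \<open>m \<le> nat \<lfloor>t / (a i * pi)\<rfloor>\<close> in auto)
  next
    fix x assume "x \<in> (\<lambda>(i,m). (m,i)) ` (SIGMA i:{..<n}. {1..nat \<lfloor>t / (a i * pi)\<rfloor>})"
    then obtain m i where x: "x = (m,i)" "1 \<le> m" "i < n" "m \<le> nat \<lfloor>t / (a i * pi)\<rfloor>" by auto
    then show "x \<in> {(m, i). 1 \<le> m \<and> i < n \<and> real m * a i * pi \<le> t}"
      using key by blast
  qed
qed

lemma count_eq:
  assumes pos: "\<forall>i<n. 0 < a i"
  shows "eh_count n a t = (\<Sum>i<n. nat \<lfloor>t / (a i * pi)\<rfloor>)"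
    and "finite (PS n a t)"
proof -
  have inj: "inj_on (\<lambda>(i,m). (m::nat,i::nat)) X" for X by (auto simp: inj_on_def)
  have "eh_count n a t = card (PS n a t)" unfolding eh_count_def PS_def by simp
  also have "\<dots> = card (SIGMA i:{..<n}. {1..nat \<lfloor>t / (a i * pi)\<rfloor>})"
    unfolding PS_eq[OF pos] by (rule card_image[OF inj])
  also have "\<dots> = (\<Sum>i<n. nat \<lfloor>t / (a i * pi)\<rfloor>)"
    by (subst card_SigmaI) auto
  finally show "eh_count n a t = (\<Sum>i<n. nat \<lfloor>t / (a i * pi)\<rfloor>)" .
  show "finite (PS n a t)" unfolding PS_eq[OF pos] by auto
qed

lemma count_bounds:
  assumes pos: "\<forall>i<n. 0 < a i" and t: "0 \<le> t"
  shows "real (eh_count n a t) \<le> t / pi * (\<Sum>i<n. 1 / a i)"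
    and "t / pi * (\<Sum>i<n. 1 / a i) - n \<le> real (eh_count n a t)"
proof -
  have e: "real (eh_count n a t) = (\<Sum>i<n. real_of_int \<lfloor>t / (a i * pi)\<rfloor>)"
    unfolding count_eq(1)[OF pos] of_nat_sum
  proof (rule sum.cong[OF refl])
    fix i assume "i \<in> {..<n}"
    then have "0 < a i * pi" using pos by simp
    then have "0 \<le> t / (a i * pi)" using t by simp
    then show "real (nat \<lfloor>t / (a i * pi)\<rfloor>) = real_of_int \<lfloor>t / (a i * pi)\<rfloor>" by simp
  qed
  have r: "t / pi * (\<Sum>i<n. 1 / a i) = (\<Sum>i<n. t / (a i * pi))"
    by (simp add: sum_distrib_left ac_simps)
  show "real (eh_count n a t) \<le> t / pi * (\<Sum>i<n. 1 / a i)"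
    unfolding e r by (rule sum_mono) simp
  have "(\<Sum>i<n. t / (a i * pi)) - real n = (\<Sum>i<n. t / (a i * pi) - 1)"
    by (simp add: sum_subtractf)
  also have "\<dots> \<le> (\<Sum>i<n. real_of_int \<lfloor>t / (a i * pi)\<rfloor>)"
    by (rule sum_mono) linarith
  finally show "t / pi * (\<Sum>i<n. 1 / a i) - n \<le> real (eh_count n a t)"
    unfolding e r .
qed

lemma count_neg:
  assumes pos: "\<forall>i<n. 0 < a i" and t: "t < 0"
  shows "eh_count n a t = 0"
proof -
  have fl: "\<lfloor>t / (a i * pi)\<rfloor> < 0" if "i < n" for i
  proof -
    have "t / (a i * pi) < 0" using pos that t by (simp add: divide_neg_pos)
    then show ?thesis by linarith
  qed
  have "nat \<lfloor>t / (a i * pi)\<rfloor> = 0" if "i \<in> {..<n}" for i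
    using fl[of i] that by simp
  then show ?thesis unfolding count_eq(1)[OF pos] by (intro sum.neutral) blast
qed

lemma PS_mono: "t \<le> u \<Longrightarrow> PS n a t \<subseteq> PS n a u"
  unfolding PS_def by auto

lemma least_props:
  assumes pos: "\<forall>i<n. 0 < a i" and k: "1 \<le> k" and n: "1 \<le> n"
  shows "k \<le> eh_count n a (EH_cap n k a)"
    and "\<And>t. t < EH_cap n k a \<Longrightarrow> eh_count n a t < k"
proof -
  define S where "S = (\<Sum>i<n. 1 / a i)"
  have Spos: "S > 0" unfolding S_def
  proof (rule sum_pos)
    have "0 \<in> {..<n}" using n by simp
    then show "{..<n} \<noteq> {}" by blast
  qed (use pos in auto)
  define T where "T = (real k + real n) * pi / S"
  have T0: "0 \<le> T" unfolding T_def using Spos by simp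
  have "T / pi * S - n = real k" unfolding T_def using Spos by simp
  then have kT: "k \<le> eh_count n a T" using count_bounds(2)[OF pos T0] unfolding S_def by linarith
  define N where "N = eh_count n a"
  have Ncard: "N t = card (PS n a t)" for t unfolding N_def eh_count_def PS_def by simp
  have fin: "finite (PS n a t)" for t using count_eq(2)[OF pos] .
  define g where "g = (\<lambda>(m::nat, i::nat). real m * a i * pi)"
  define V where "V = {v \<in> g ` PS n a T. k \<le> N v}"
  have claim: "\<exists>v\<in>V. v \<le> t" if kt: "k \<le> N t" for t
  proof -
    define u where "u = min t T"
    have ku: "k \<le> N u"
      using kt kT unfolding u_def N_def by (cases "t \<le> T") (auto simp: min_def)
    have sub: "PS n a u \<subseteq> PS n a T" by (rule PS_mono) (simp add: u_def)
    have ne: "PS n a u \<noteq> {}" using ku k Ncard by (metis card.empty le_zero_eq not_one_le_zero)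
    define v where "v = Max (g ` PS n a u)"
    have vin: "v \<in> g ` PS n a u" unfolding v_def using fin ne by (intro Max_in) auto
    have vu: "v \<le> u" using vin unfolding g_def PS_def by auto
    have eq: "PS n a v = PS n a u"
    proof
      show "PS n a v \<subseteq> PS n a u" using vu by (rule PS_mono)
      show "PS n a u \<subseteq> PS n a v"
      proof
        fix x assume x: "x \<in> PS n a u"
        then have "g x \<le> v" unfolding v_def using fin by (intro Max_ge) auto
        then show "x \<in> PS n a v" using x unfolding PS_def g_def by auto
      qed
    qed
    have "v \<in> V" unfolding V_def using vin sub ku eq Ncard by auto
    moreover have "v \<le> t" using vu unfolding u_def by simp
    ultimately show ?thesis by blast
  qed
  have finV: "finite V" unfolding V_def using fin by auto
  obtain v0 where "v0 \<in> V" using claim[OF kT[folded N_def]] by blast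
  then have neV: "V \<noteq> {}" by blast
  define mu where "mu = Min V"
  have muV: "mu \<in> V" unfolding mu_def using finV neV by (rule Min_in)
  have minp: "mu \<le> y" if yk: "k \<le> eh_count n a y" for y
  proof -
    obtain v where "v \<in> V" "v \<le> y" using claim yk unfolding N_def by blast
    then show "mu \<le> y" unfolding mu_def using finV by (meson Min_le order_trans)
  qed
  have L: "EH_cap n k a = mu"
    unfolding EH_cap_def
  proof (rule Least_equality)
    show "k \<le> eh_count n a mu" using muV unfolding V_def N_def by auto
    fix y assume "k \<le> eh_count n a y"
    then obtain v where "v \<in> V" "v \<le> y" using claim unfolding N_def by blast
    then show "mu \<le> y" unfolding mu_def using finV by (meson Min_le order_trans)
  qed
  show "k \<le> eh_count n a (EH_cap n k a)" using muV unfolding L V_def N_def by auto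
  fix t assume "t < EH_cap n k a"
  then show "eh_count n a t < k"
    unfolding L using minp[of t] by linarith
qed
lemma arith_bound:
  fixes x S q k n :: real
  assumes S: "S \<ge> 1" and q: "q > 0" and k: "k > 0" and h1: "k \<le> x * S" and h2: "x * S \<le> k + n - 1"
    and h3: "k \<le> n * q" and h4: "n * q \<le> k + n - 1" and n: "n \<ge> 1"
  shows "\<bar>x / q - n / S\<bar> \<le> n * n / k"
proof -
  have Sp: "S > 0" using S by simp
  have e: "x / q - n / S = (x * S - n * q) / (q * S)" using Sp q by (simp add: field_simps)
  have a: "\<bar>x * S - n * q\<bar> \<le> n - 1" using h1 h2 h3 h4 by linarith
  have "\<bar>x / q - n / S\<bar> = \<bar>x * S - n * q\<bar> / (q * S)" unfolding e using Sp q by (simp add: abs_divide)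
  also have "\<dots> \<le> (n - 1) / (q * S)" using a Sp q by (intro divide_right_mono) auto
  also have "\<dots> \<le> (n - 1) / q" using S q n by (intro divide_left_mono) (auto simp: mult_le_cancel_left1)
  also have "\<dots> \<le> n * n / k"
  proof -
    have "(n - 1) * k \<le> (n - 1) * (n * q)" using h3 n by (intro mult_left_mono) auto
    also have "\<dots> \<le> n * n * q" using n q by (simp add: algebra_simps)
    finally show ?thesis using q k by (simp add: divide_simps)
  qed
  finally show ?thesis .
qed

lemma cap_bound:
  assumes n2: "n \<ge> 2" and pos: "\<forall>i<n. 0 < a i" and a1: "a (n - 1) = 1" and k: "k \<ge> 1"
  shows "\<bar>EH_cap_bar n k a - c_infty n a\<bar> \<le> real n * real n / real k"
proof -
  have n1: "1 \<le> n" using n2 by simp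
  define S where "S = (\<Sum>i<n. 1 / a i)"
  have "1 / a (n - 1) \<le> S" unfolding S_def
    using n1 pos by (intro member_le_sum) (auto simp: less_imp_le)
  then have S1: "S \<ge> 1" using a1 by simp
  define d where "d = EH_cap n k a"
  have kd: "k \<le> eh_count n a d" using least_props(1)[OF pos k n1] unfolding d_def .
  have d0: "0 \<le> d"
  proof (rule ccontr)
    assume "\<not> 0 \<le> d"
    then have "eh_count n a d = 0" using count_neg[OF pos] by simp
    then show False using kd k by simp
  qed
  have h1: "real k \<le> d / pi * S"
    using count_bounds(1)[OF pos d0] kd unfolding S_def by linarith
  have h2: "d \<le> (real k + real n - 1) * pi / S"
  proof (rule dense_le)
    fix t assume t: "t < d"
    show "t \<le> (real k + real n - 1) * pi / S"
    proof (cases "t < 0")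
      case True
      have "0 \<le> (real k + real n - 1) * pi / S" using S1 n1 by simp
      then show ?thesis using True by linarith
    next
      case False
      have "eh_count n a t < k" using least_props(2)[OF pos k n1] t unfolding d_def by simp
      then have "real (eh_count n a t) \<le> real k - 1" by linarith
      then have "t / pi * S \<le> real k + real n - 1"
        using count_bounds(2)[OF pos, of t] False unfolding S_def by linarith
      then show ?thesis using S1 by (simp add: field_simps)
    qed
  qed
  define q where "q = (k + n - 1) div n"
  have dm: "q * n + (k + n - 1) mod n = k + n - 1" unfolding q_def by (rule div_mult_mod_eq)
  have ml: "(k + n - 1) mod n < n" using n1 by simp
  have qa: "n * q \<le> k + n - 1" "k \<le> n * q"
    using dm ml n1 mult.commute[of q n] by linarith+
  then have q0: "q > 0" using k by (cases q) auto
  have e1: "real (k + n - 1) = real k + real n - 1" using n1 by (simp add: of_nat_diff)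
  have rq1: "real (n * q) \<le> real (k + n - 1)" using qa(1) by (rule of_nat_mono)
  have rq2: "real k \<le> real (n * q)" using qa(2) by (rule of_nat_mono)
  have rq: "real n * real q \<le> real k + real n - 1" "real k \<le> real n * real q"
    using rq1 rq2 e1 by simp_all
  have hx1: "real k \<le> (d / pi) * S" using h1 by simp
  have hx2: "(d / pi) * S \<le> real k + real n - 1" using h2 S1 by (simp add: field_simps)
  have "\<bar>(d / pi) / real q - real n / S\<bar> \<le> real n * real n / real k"
    by (rule arith_bound[OF S1 _ _ hx1 hx2 rq(2) rq(1)]) (use q0 k n1 in auto)
  moreover have "EH_cap_bar n k a = (d / pi) / real q"
    unfolding EH_cap_bar_def d_def q_def by simp
  moreover have "c_infty n a = real n / S" unfolding c_infty_def S_def ..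
  ultimately show ?thesis by simp
qed

theorem mainTheorem1:
  fixes n :: nat
  assumes "n \<ge> 2"
  shows "(\<lambda>k. SUP a \<in> {a :: nat \<Rightarrow> real. (\<forall>i<n. 0 < a i)
                 \<and> (\<forall>i j. i \<le> j \<and> j < n \<longrightarrow> a i \<le> a j) \<and> a (n - 1) = 1}.
            \<bar>EH_cap_bar n k a - c_infty n a\<bar>) \<longlonglongrightarrow> 0"
proof -
  define A where "A = {a :: nat \<Rightarrow> real. (\<forall>i<n. 0 < a i)
                 \<and> (\<forall>i j. i \<le> j \<and> j < n \<longrightarrow> a i \<le> a j) \<and> a (n - 1) = 1}"
  define g where "g = (\<lambda>k a. \<bar>EH_cap_bar n k a - c_infty n a\<bar>)"
  have a0: "(\<lambda>_. 1) \<in> A" unfolding A_def by simp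
  have gb: "g k a \<le> real n * real n / real k" if "a \<in> A" "k \<ge> 1" for a k
    using cap_bound[OF assms _ _ that(2)] that(1) unfolding A_def g_def by blast
  have lo: "0 \<le> (SUP a\<in>A. g k a)" if k: "k \<ge> 1" for k
  proof -
    have "bdd_above (g k ` A)" using gb[OF _ k] by (intro bdd_aboveI2) blast
    then have "g k (\<lambda>_. 1) \<le> (SUP a\<in>A. g k a)" by (rule cSUP_upper[OF a0])
    moreover have "0 \<le> g k (\<lambda>_. 1)" unfolding g_def by simp
    ultimately show ?thesis by linarith
  qed
  have hi: "(SUP a\<in>A. g k a) \<le> real n * real n / real k" if k: "k \<ge> 1" for k
    using a0 gb[OF _ k] by (intro cSUP_least) auto
  have "(\<lambda>k. SUP a\<in>A. g k a) \<longlonglongrightarrow> 0"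
  proof (rule tendsto_sandwich[of "\<lambda>_. 0" _ _ "\<lambda>k. real n * real n / real k"])
    show "\<forall>\<^sub>F k in sequentially. 0 \<le> (SUP a\<in>A. g k a)"
      using lo by (intro eventually_sequentiallyI[of 1]) auto
    show "\<forall>\<^sub>F k in sequentially. (SUP a\<in>A. g k a) \<le> real n * real n / real k"
      using hi by (intro eventually_sequentiallyI[of 1]) auto
  qed (auto intro: lim_const_over_n)
  then show ?thesis unfolding A_def g_def .
qed

end
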